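(* Let $V_\theta$ be a real vector space of dimension $2$, and let $M\subset V_\theta\times[0,1]$ be a dichotomous item response hypersurface (IRHS), with associated function $f:V_\theta\to[0,1]$ (so $M=\{(\theta,f(\theta)):\theta\in V_\theta\}$). Then the MIRT model given by $M$ is a trivial extension of a unidimensional IRT model: there exist nonzero vectors $u,v\in V_\theta$, linearly independent, such that $$f(\mu u+\lambda v)=f(\mu u)\quad\text{for all }\mu,\lambda\in\mathbb{R},$$ so that $f$ is determined by the monotonic function $\mu\mapsto f(\mu u)$, $\mathbb{R}\to[0,1]$.
   Context: A dichotomous item response hypersurface (IRHS) is a $D=\dim V_\theta$ dimensional smooth submanifold $M$ of $V_\theta\times[0,1]$ such that for any two vectors $v,w\in V_\theta$, the intersection of $(w+\mathbb{R}\cdot v)\times[0,1]$ with $M$ is the graph of a monotonic function $w+\mathbb{R}\cdot v\to[0,1]$, where $w+\mathbb{R}\cdot v=\{w+\lambda v:\lambda\in\mathbb{R}\}$. A function $g:w+\mathbb{R}\cdot v\to[0,1]$ is called monotonic if either $g(w+\lambda v)\le g(w+\mu v)$ for all $\lambda\le\mu$, or $g(w+\lambda v)\ge g(w+\mu v)$ for all $\lambda\le\mu$. (Taking $v=0$ shows that $M$ is the graph of a function $f:V_\theta\to[0,1]$.) A MIRT model is given by an IRHS; a unidimensional IRT model is a monotonic function $\mathbb{R}\to[0,1]$. *)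

theory Defs
  imports "HOL-Analysis.Analysis"
begin

fun Ck_on :: "nat \<Rightarrow> 'a::euclidean_space set \<Rightarrow> ('a \<Rightarrow> 'b::euclidean_space) \<Rightarrow> bool" where
  "Ck_on 0 S f = continuous_on S f"
| "Ck_on (Suc k) S f =
     (\<exists>f'. (\<forall>x\<in>S. (f has_derivative f' x) (at x)) \<and> (\<forall>v. Ck_on k S (\<lambda>x. f' x v)))"

definition smooth_on :: "'a::euclidean_space set \<Rightarrow> ('a \<Rightarrow> 'b::euclidean_space) \<Rightarrow> bool" where
  "smooth_on S f \<longleftrightarrow> (\<forall>k. Ck_on k S f)"

definition smooth_submanifold :: "nat \<Rightarrow> 'a::euclidean_space set \<Rightarrow> bool" where
  "smooth_submanifold D M \<longleftrightarrow>
     (\<forall>p\<in>M. \<exists>U (\<phi>::'a\<Rightarrow>'a) (\<psi>::'a\<Rightarrow>'a) (L::'a set). open U \<and> p \<in> U \<and> open (\<phi> ` U) \<and>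
        smooth_on U \<phi> \<and> smooth_on (\<phi> ` U) \<psi> \<and> (\<forall>x\<in>U. \<psi> (\<phi> x) = x) \<and>
        subspace L \<and> dim L = D \<and> \<phi> ` (M \<inter> U) = \<phi> ` U \<inter> L)"

definition line_through :: "'v::real_vector \<Rightarrow> 'v \<Rightarrow> 'v set" where
  "line_through w v = {w + t *\<^sub>R v | t. True}"

definition monotonic_on_line :: "'v::real_vector \<Rightarrow> 'v \<Rightarrow> ('v \<Rightarrow> real) \<Rightarrow> bool" where
  "monotonic_on_line w v g \<longleftrightarrow>
     (\<forall>t s. t \<le> s \<longrightarrow> g (w + t *\<^sub>R v) \<le> g (w + s *\<^sub>R v)) \<or>
     (\<forall>t s. t \<le> s \<longrightarrow> g (w + t *\<^sub>R v) \<ge> g (w + s *\<^sub>R v))"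

definition IRHS :: "('v::euclidean_space \<times> real) set \<Rightarrow> bool" where
  "IRHS M \<longleftrightarrow> smooth_submanifold DIM('v) M \<and> M \<subseteq> UNIV \<times> {0..1} \<and>
     (\<forall>v w. \<exists>g. monotonic_on_line w v g \<and>
        M \<inter> (line_through w v \<times> {0..1}) = (\<lambda>x. (x, g x)) ` line_through w v)"

definition monotonic :: "(real \<Rightarrow> real) \<Rightarrow> bool" where
  "monotonic h \<longleftrightarrow> mono h \<or> antimono h"

end

theory Submission
  imports Defs
begin

lemma graph_cont:
  fixes f :: "'v::euclidean_space \<Rightarrow> real"
  assumes sm: "smooth_submanifold DIM('v) (range (\<lambda>\<theta>. (\<theta>, f \<theta>)))"
  shows "continuous_on UNIV f"
proof -
  let ?M = "range (\<lambda>\<theta>. (\<theta>, f \<theta>))"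
  have "isCont f p" for p
  proof -
    have mem: "(p, f p) \<in> ?M" by simp
    obtain U and \<phi> \<psi> :: "('v \<times> real) \<Rightarrow> ('v \<times> real)" and L where U: "open U" "(p, f p) \<in> U" "open (\<phi> ` U)"
      and sphi: "smooth_on U \<phi>" and spsi: "smooth_on (\<phi> ` U) \<psi>"
      and inv: "\<forall>x\<in>U. \<psi> (\<phi> x) = x" and L: "subspace L" "dim L = DIM('v)"
      and im: "\<phi> ` (?M \<inter> U) = \<phi> ` U \<inter> L"
      using sm[unfolded smooth_submanifold_def, rule_format, OF mem] by blast
    have cphi: "continuous_on U \<phi>" using sphi unfolding smooth_on_def
      by (metis Ck_on.simps(1))
    have cpsi: "continuous_on (\<phi> ` U) \<psi>" using spsi unfolding smooth_on_def
      by (metis Ck_on.simps(1))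
    define S where "S = \<phi> ` U \<inter> L"
    define g where "g = fst \<circ> \<psi>"
    define h where "h = (\<lambda>\<theta>. \<phi> (\<theta>, f \<theta>))"
    define T where "T = g ` S"
    have Srep: "\<exists>a. (a, f a) \<in> U \<and> x = \<phi> (a, f a)" if "x \<in> S" for x
    proof -
      have "x \<in> \<phi> ` (?M \<inter> U)" using that im S_def by simp
      then show ?thesis by auto
    qed
    have gx: "g x = a" if "(a, f a) \<in> U" "x = \<phi> (a, f a)" for x a
      using that inv by (simp add: g_def)
    have Sopen: "openin (top_of_set L) S"
      unfolding S_def using U(3) by (simp add: Int_commute openin_open_Int)
    have gcont: "continuous_on S g"
      unfolding g_def S_def
      by (rule continuous_on_compose) (auto intro: continuous_on_subset[OF cpsi] continuous_intros)
    have hg: "h (g x) = x" if xS: "x \<in> S" for x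
    proof -
      obtain a where a: "(a, f a) \<in> U" "x = \<phi> (a, f a)" using Srep[OF xS] by blast
      have "g x = a" by (rule gx[OF a])
      then show ?thesis using a(2) by (simp add: h_def)
    qed
    have Tmem: "(\<theta>, f \<theta>) \<in> U \<and> h \<theta> \<in> S" if tT: "\<theta> \<in> T" for \<theta>
    proof -
      obtain x where x: "x \<in> S" "\<theta> = g x" using tT T_def by blast
      obtain a where a: "(a, f a) \<in> U" "x = \<phi> (a, f a)" using Srep[OF x(1)] by blast
      have "g x = a" by (rule gx[OF a])
      then have "\<theta> = a" using x(2) by simp
      then show ?thesis using a x(1) by (simp add: h_def)
    qed
    have ginj: "inj_on g S"
    proof (rule inj_onI)
      fix x y assume "x \<in> S" "y \<in> S" "g x = g y"
      then show "x = y" using hg by metis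
    qed
    have ow: "open (g ` W)" if W: "openin (top_of_set S) W" for W
    proof -
      have WL: "openin (top_of_set L) W" using W Sopen openin_trans by blast
      have WS: "W \<subseteq> S" using W by (rule openin_imp_subset)
      have "openin (top_of_set (UNIV::'v set)) (g ` W)"
      proof (rule invariance_of_domain_subspaces[OF WL L(1)])
        show "subspace (UNIV::'v set)" by (rule subspace_UNIV)
        show "dim (UNIV::'v set) \<le> dim L" using L(2) by simp
        show "continuous_on W g" by (rule continuous_on_subset[OF gcont WS])
        show "g \<in> W \<rightarrow> UNIV" by simp
        show "inj_on g W" by (rule inj_on_subset[OF ginj WS])
      qed
      then show "open (g ` W)" by simp
    qed
    have oo: "openin (top_of_set T) (g ` W)" if W: "openin (top_of_set S) W" for W
    proof -
      have "g ` W \<subseteq> T" using openin_imp_subset[OF W] T_def by blast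
      then show ?thesis using ow[OF W] by (metis inf.absorb_iff2 openin_open)
    qed
    have hc: "continuous_on T h"
    proof (rule continuous_on_inverse_open_map[OF gcont T_def[symmetric]])
      show "\<And>x. x \<in> S \<Longrightarrow> h (g x) = x" by (rule hg)
      show "\<And>U. openin (top_of_set S) U \<Longrightarrow> openin (top_of_set T) (g ` U)" by (rule oo)
    qed
    have hT: "h ` T \<subseteq> \<phi> ` U"
    proof
      fix y assume "y \<in> h ` T"
      then obtain \<theta> where "\<theta> \<in> T" "y = h \<theta>" by blast
      then show "y \<in> \<phi> ` U" using Tmem S_def by blast
    qed
    have feq: "f \<theta> = (snd \<circ> \<psi> \<circ> h) \<theta>" if "\<theta> \<in> T" for \<theta>
      using Tmem[OF that] inv by (simp add: h_def)
    have "continuous_on T (snd \<circ> \<psi> \<circ> h)"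
      by (intro continuous_on_compose hc continuous_on_subset[OF cpsi hT] continuous_intros)
    then have cT: "continuous_on T f"
      by (rule continuous_on_eq) (simp add: feq)
    have "open T"
    proof -
      show ?thesis unfolding T_def by (rule ow) simp
    qed
    moreover have "p \<in> T"
    proof -
      have "\<phi> (p, f p) \<in> \<phi> ` (?M \<inter> U)" using U(2) by blast
      then have "\<phi> (p, f p) \<in> S" using im S_def by simp
      moreover have "g (\<phi> (p, f p)) = p" by (rule gx[OF U(2) refl])
      ultimately show ?thesis unfolding T_def by (metis image_eqI)
    qed
    ultimately show ?thesis using cT continuous_on_eq_continuous_at by blast
  qed
  then show ?thesis by (simp add: continuous_at_imp_continuous_on)
qed


theorem theorem1:
  fixes f :: "'v::euclidean_space \<Rightarrow> real"
  assumes "DIM('v) = 2"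
    and "IRHS (range (\<lambda>\<theta>. (\<theta>, f \<theta>)))"
  shows "\<exists>u v. u \<noteq> 0 \<and> v \<noteq> 0 \<and> u \<noteq> v \<and> independent {u, v} \<and>
           (\<forall>\<mu> t. f (\<mu> *\<^sub>R u + t *\<^sub>R v) = f (\<mu> *\<^sub>R u)) \<and>
           monotonic (\<lambda>\<mu>. f (\<mu> *\<^sub>R u)) \<and> (\<forall>\<mu>. f (\<mu> *\<^sub>R u) \<in> {0..1})"
proof -
  let ?M = "range (\<lambda>\<theta>. (\<theta>, f \<theta>))"
  have cont: "continuous_on UNIV f"
    using assms(2) graph_cont unfolding IRHS_def by blast
  have fin: "f x \<in> {0..1}" for x
    using assms(2) unfolding IRHS_def by blast
  have ml: "monotonic_on_line w v f" for w v
  proof -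
    obtain g where g: "monotonic_on_line w v g"
      and eq: "?M \<inter> (line_through w v \<times> {0..1}) = (\<lambda>x. (x, g x)) ` line_through w v"
      using assms(2) unfolding IRHS_def by blast
    have "f (w + t *\<^sub>R v) = g (w + t *\<^sub>R v)" for t
    proof -
      have "w + t *\<^sub>R v \<in> line_through w v" unfolding line_through_def by blast
      then have "(w + t *\<^sub>R v, f (w + t *\<^sub>R v)) \<in> (\<lambda>x. (x, g x)) ` line_through w v"
        using fin eq[symmetric] by blast
      then show ?thesis by auto
    qed
    then show ?thesis using g unfolding monotonic_on_line_def by simp
  qed
  have seg: "min (f x) (f y) \<le> f (x + u *\<^sub>R (y - x)) \<and> f (x + u *\<^sub>R (y - x)) \<le> max (f x) (f y)"
    if "0 \<le> u" "u \<le> 1" for x y u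
  proof -
    have "(\<forall>t s. t \<le> s \<longrightarrow> f (x + t *\<^sub>R (y - x)) \<le> f (x + s *\<^sub>R (y - x))) \<or>
     (\<forall>t s. t \<le> s \<longrightarrow> f (x + t *\<^sub>R (y - x)) \<ge> f (x + s *\<^sub>R (y - x)))"
      using ml[of x "y - x"] unfolding monotonic_on_line_def .
    then show ?thesis
    proof
      assume h: "\<forall>t s. t \<le> s \<longrightarrow> f (x + t *\<^sub>R (y - x)) \<le> f (x + s *\<^sub>R (y - x))"
      have "f x \<le> f (x + u *\<^sub>R (y - x))" using h[rule_format, of 0 u] that by simp
      moreover have "f (x + u *\<^sub>R (y - x)) \<le> f y" using h[rule_format, of u 1] that by simp
      ultimately show ?thesis by linarith
    next
      assume h: "\<forall>t s. t \<le> s \<longrightarrow> f (x + t *\<^sub>R (y - x)) \<ge> f (x + s *\<^sub>R (y - x))"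
      have "f x \<ge> f (x + u *\<^sub>R (y - x))" using h[rule_format, of 0 u] that by simp
      moreover have "f (x + u *\<^sub>R (y - x)) \<ge> f y" using h[rule_format, of u 1] that by simp
      ultimately show ?thesis by linarith
    qed
  qed
  have cvx_lt: "convex {x. f x < d}" for d
    unfolding convex_def
  proof (intro ballI allI impI)
    fix x y and u v :: real
    assume x: "x \<in> {x. f x < d}" and y: "y \<in> {x. f x < d}" and uv: "0 \<le> u" "0 \<le> v" "u + v = 1"
    have e: "u *\<^sub>R x + v *\<^sub>R y = x + v *\<^sub>R (y - x)"
      using uv by (simp add: algebra_simps flip: scaleR_add_left)
    show "u *\<^sub>R x + v *\<^sub>R y \<in> {x. f x < d}"
      using seg[of v x y] uv x y unfolding e by auto
  qed
  have cvx_gt: "convex {x. f x > d}" for d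
    unfolding convex_def
  proof (intro ballI allI impI)
    fix x y and u v :: real
    assume x: "x \<in> {x. f x > d}" and y: "y \<in> {x. f x > d}" and uv: "0 \<le> u" "0 \<le> v" "u + v = 1"
    have e: "u *\<^sub>R x + v *\<^sub>R y = x + v *\<^sub>R (y - x)"
      using uv by (simp add: algebra_simps flip: scaleR_add_left)
    show "u *\<^sub>R x + v *\<^sub>R y \<in> {x. f x > d}"
      using seg[of v x y] uv x y unfolding e by auto
  qed
  have sep: "\<exists>n k. n \<noteq> 0 \<and> (\<forall>x. inner n x \<le> k \<longrightarrow> f x \<le> d) \<and> (\<forall>x. inner n x \<ge> k \<longrightarrow> f x \<ge> d)"
    if "f a < d" "d < f b" for a b d
  proof -
    have ne1: "{x. f x < d} \<noteq> {}" using that by blast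
    have ne2: "{x. f x > d} \<noteq> {}" using that by blast
    have dj: "{x. f x < d} \<inter> {x. f x > d} = {}" by auto
    obtain n k where n: "n \<noteq> 0" and A: "\<forall>x\<in>{x. f x < d}. inner n x \<le> k"
      and B: "\<forall>x\<in>{x. f x > d}. inner n x \<ge> k"
      using separating_hyperplane_sets[OF cvx_lt[of d] cvx_gt[of d] ne1 ne2 dj] by blast
    have cf: "continuous_on UNIV (\<lambda>x. d)" by (rule continuous_on_const)
    have oA: "open {x. f x < d}" by (rule open_Collect_less[OF cont cf])
    have oB: "open {x. d < f x}" by (rule open_Collect_less[OF cf cont])
    have "{x. f x < d} \<subseteq> interior {x. inner n x \<le> k}"
      using A oA by (intro interior_maximal) auto
    then have A': "f x < d \<Longrightarrow> inner n x < k" for x using n interior_halfspace_le[OF n, of k] by blast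
    have "{x. f x > d} \<subseteq> interior {x. inner n x \<ge> k}"
      using B oB by (intro interior_maximal) auto
    then have B': "f x > d \<Longrightarrow> inner n x > k" for x using n interior_halfspace_ge[OF n, of k] by blast
    have "(\<forall>x. inner n x \<le> k \<longrightarrow> f x \<le> d) \<and> (\<forall>x. inner n x \<ge> k \<longrightarrow> f x \<ge> d)"
      using A' B' by (meson not_le)
    then show ?thesis using n by blast
  qed
  have two: "2 \<le> DIM('v)" using assms(1) by simp
  have indep: "independent {u, v} \<and> u \<noteq> v" if "u \<noteq> 0" "v \<noteq> 0" "orthogonal u v" for u v :: 'v
  proof -
    have "u \<noteq> v" using that by (auto simp: orthogonal_def)
    moreover have "independent {u, v}"
      by (rule pairwise_orthogonal_independent)
        (use that in \<open>auto simp: pairwise_def orthogonal_commute\<close>)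
    ultimately show ?thesis by simp
  qed
  have monou: "monotonic (\<lambda>\<mu>. f (\<mu> *\<^sub>R u))" for u
    using ml[of 0 u] unfolding monotonic_on_line_def monotonic_def mono_def antimono_def by simp
  show ?thesis
  proof (cases "\<forall>a b. f a = f b")
    case True
    obtain u :: 'v where u: "u \<in> Basis" using nonempty_Basis by blast
    then have u0: "u \<noteq> 0" by auto
    obtain v where v: "v \<noteq> 0" "orthogonal u v" using orthogonal_to_vector_exists[OF two] by blast
    show ?thesis
    proof -
      have c1: "u \<noteq> 0 \<and> v \<noteq> 0" using u0 v by auto
      have c2: "u \<noteq> v \<and> independent {u, v}" using indep[OF u0 v(1,2)] by auto
      have c3: "monotonic (\<lambda>\<mu>. f (\<mu> *\<^sub>R u))" by (rule monou)
      have c4: "\<forall>\<mu> t. f (\<mu> *\<^sub>R u + t *\<^sub>R v) = f (\<mu> *\<^sub>R u)" using True by blast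
      have c5: "\<forall>\<mu>. f (\<mu> *\<^sub>R u) \<in> {0..1}" using fin by blast
      show ?thesis
        apply (rule exI[of _ u], rule exI[of _ v])
        using c1 c2 c3 c4 c5 by blast
    qed
  next
    case False
    then obtain a0 b0 where "f a0 \<noteq> f b0" by blast
    then obtain a b where ab: "f a < f b"
    proof (cases "f a0 < f b0")
      case True then show ?thesis using that by blast
    next
      case False then have "f b0 < f a0" using \<open>f a0 \<noteq> f b0\<close> by linarith
      then show ?thesis using that by blast
    qed
    define c0 where "c0 = (f a + f b) / 2"
    obtain n0 k0 where n0: "n0 \<noteq> 0" and n0le: "\<forall>x. inner n0 x \<le> k0 \<longrightarrow> f x \<le> c0"
      and n0ge: "\<forall>x. inner n0 x \<ge> k0 \<longrightarrow> f x \<ge> c0"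
      using sep[of a c0 b] ab c0_def by auto
    obtain v where v: "v \<noteq> 0" "orthogonal n0 v" using orthogonal_to_vector_exists[OF two] by blast
    have nv0: "inner n0 v = 0" using v by (simp add: orthogonal_def)
    have good: "\<exists>n k. inner n v = 0 \<and> (\<forall>x. inner n x \<le> k \<longrightarrow> f x \<le> d) \<and> (\<forall>x. inner n x \<ge> k \<longrightarrow> f x \<ge> d)"
      if pq: "f p < d" "d < f q" for p q d
    proof (cases "d = c0")
      case True
      then show ?thesis using nv0 n0le n0ge by blast
    next
      case False
      obtain n k where n: "n \<noteq> 0" and le: "\<forall>x. inner n x \<le> k \<longrightarrow> f x \<le> d"
        and ge: "\<forall>x. inner n x \<ge> k \<longrightarrow> f x \<ge> d"
        using sep[OF pq] by blast
      have "inner n v = 0"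
      proof (rule ccontr)
        assume nz: "inner n v \<noteq> 0"
        define y where "y = (k0 / inner n0 n0) *\<^sub>R n0"
        have y: "inner n0 y = k0" using n0 by (simp add: y_def)
        define z where "z = y + ((k - inner n y) / inner n v) *\<^sub>R v"
        have z0: "inner n0 z = k0" using y nv0 by (simp add: z_def inner_add_right)
        have z1: "inner n z = k" using nz by (simp add: z_def inner_add_right)
        have "f z \<le> c0" using z0 n0le by simp
        moreover have "f z \<ge> c0" using z0 n0ge by simp
        moreover have "f z \<le> d" using z1 le by simp
        moreover have "f z \<ge> d" using z1 ge by simp
        ultimately show False using False by linarith
      qed
      then show ?thesis using le ge by blast
    qed
    have noneq: False if pq: "f p < f q" "q = p + t *\<^sub>R v" for p q t
    proof -
      define d where "d = (f p + f q) / 2"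
      obtain n k where nv: "inner n v = 0" and le: "\<forall>x. inner n x \<le> k \<longrightarrow> f x \<le> d"
        and ge: "\<forall>x. inner n x \<ge> k \<longrightarrow> f x \<ge> d"
        using good[of p d q] pq(1) d_def by auto
      have "inner n q = inner n p" using that nv by (simp add: inner_add_right)
      then show False
      proof (cases "inner n p \<le> k")
        case True
        then have "f q \<le> d" using le \<open>inner n q = inner n p\<close> by simp
        then show False using pq(1) by (simp add: d_def field_simps)
      next
        case False
        then have "k \<le> inner n p" by simp
        then have "f p \<ge> d" using ge by blast
        then show False using pq(1) by (simp add: d_def field_simps)
      qed
    qed
    have const: "f (x + t *\<^sub>R v) = f x" for x t
    proof (rule ccontr)
      assume "f (x + t *\<^sub>R v) \<noteq> f x"
      then consider "f x < f (x + t *\<^sub>R v)" | "f (x + t *\<^sub>R v) < f x" by linarith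
      then show False
      proof cases
        case 1 show ?thesis using noneq[OF 1 refl] .
      next
        case 2
        have "x = (x + t *\<^sub>R v) + (- t) *\<^sub>R v" by simp
        then show ?thesis using noneq[OF 2] by blast
      qed
    qed
    show ?thesis
    proof -
      have c1: "n0 \<noteq> 0 \<and> v \<noteq> 0" using n0 v by auto
      have c2: "n0 \<noteq> v \<and> independent {n0, v}" using indep[OF n0 v(1,2)] by auto
      have c3: "monotonic (\<lambda>\<mu>. f (\<mu> *\<^sub>R n0))" by (rule monou)
      have c4: "\<forall>\<mu> t. f (\<mu> *\<^sub>R n0 + t *\<^sub>R v) = f (\<mu> *\<^sub>R n0)" using const by blast
      have c5: "\<forall>\<mu>. f (\<mu> *\<^sub>R n0) \<in> {0..1}" using fin by blast
      show ?thesis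
        apply (rule exI[of _ n0], rule exI[of _ v])
        using c1 c2 c3 c4 c5 by blast
    qed
  qed
qed

end
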